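(* Let $\mathcal H$ be a real Hilbert space, let $A_1:\mathcal H\to\mathcal H$ be $\beta$-cocoercive for some $\beta>0$, let $A_2:\mathcal H\to\mathcal H$ be maximally monotone and uniformly continuous, let $B:\mathcal H\rightrightarrows\mathcal H$ be maximally monotone, set $A:=A_1+A_2$, and assume $\operatorname{zer}(A+B)\neq\emptyset$. Let $\theta,\delta\in(0,1)$, $x^k\in\mathcal H$ and $\alpha_{k-1}>0$, and for $j\in\mathbb N$ put $\bar x^k_j:=J_{\alpha_{k-1}\theta^jB}(x^k-\alpha_{k-1}\theta^jAx^k)$. Then there exists $j\in\mathbb N$ (hence a smallest one) such that $$\alpha_{k-1}\theta^j\langle A_2x^k-A_2\bar x^k_j,\,x^k-\bar x^k_j\rangle\le\delta\|x^k-\bar x^k_j\|^2,$$ i.e., the backtracking inequality holds after finitely many steps.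
   Context: $\langle\cdot,\cdot\rangle$ and $\|\cdot\|$ are the inner product and norm of $\mathcal H$; $\mathbb N=\{0,1,2,\dots\}$. $A_1$ is $\beta$-cocoercive means $\langle A_1x-A_1y,x-y\rangle\ge\beta\|A_1x-A_1y\|^2$ for all $x,y\in\mathcal H$. $\operatorname{zer}(A+B):=\{x\in\mathcal H: 0\in Ax+Bx\}$. For $\alpha>0$, $J_{\alpha B}:=(I+\alpha B)^{-1}$ is the resolvent of $B$ (single-valued with full domain). *)

theory Defs
  imports "HOL-Analysis.Analysis"
begin

text \<open>Set-valued operators on a real Hilbert space are modelled as functions
  'a \<Rightarrow> 'a set (the image of x is B x; the graph is {(x,u). u \<in> B x}).\<close>

definition monotone_op :: "('a::real_inner \<Rightarrow> 'a set) \<Rightarrow> bool" where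
  "monotone_op B \<longleftrightarrow> (\<forall>x y u v. u \<in> B x \<longrightarrow> v \<in> B y \<longrightarrow> inner (u - v) (x - y) \<ge> 0)"

definition maximal_monotone :: "('a::real_inner \<Rightarrow> 'a set) \<Rightarrow> bool" where
  "maximal_monotone B \<longleftrightarrow> monotone_op B \<and>
     (\<forall>C. monotone_op C \<longrightarrow> (\<forall>x. B x \<subseteq> C x) \<longrightarrow> C = B)"

definition cocoercive :: "real \<Rightarrow> ('a::real_inner \<Rightarrow> 'a) \<Rightarrow> bool" where
  "cocoercive \<beta> T \<longleftrightarrow> (\<forall>x y. inner (T x - T y) (x - y) \<ge> \<beta> * (norm (T x - T y))\<^sup>2)"

definition zer :: "('a::real_vector \<Rightarrow> 'a) \<Rightarrow> ('a \<Rightarrow> 'a set) \<Rightarrow> 'a set" where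
  "zer A B = {x. 0 \<in> (\<lambda>u. A x + u) ` B x}"

text \<open>Resolvent J_{\<alpha>B} = (I + \<alpha>B)^{-1}: J y is the (unique, for maximally monotone B
  and \<alpha> > 0) point x with y \<in> x + \<alpha> B x.\<close>
definition resolvent :: "real \<Rightarrow> ('a::real_vector \<Rightarrow> 'a set) \<Rightarrow> 'a \<Rightarrow> 'a" where
  "resolvent \<alpha> B y = (THE x. y \<in> (\<lambda>u. x + \<alpha> *\<^sub>R u) ` B x)"

end

theory Submission
  imports Defs
begin


lemma inner_swap: "inner (a - b) (c - d) = inner (b - a) (d - (c::'a::real_inner))"
  by (simp add: inner_diff_left inner_diff_right)

lemma max_mono_related:
  fixes B :: "'a::real_inner \<Rightarrow> 'a set"
  assumes mm: "maximal_monotone B" and rel: "\<forall>y v. v \<in> B y \<longrightarrow> inner (u - v) (x - y) \<ge> 0"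
  shows "u \<in> B x"
proof -
  define C where "C = (\<lambda>z. if z = x then insert u (B z) else B z)"
  have mB: "monotone_op B" using mm by (simp add: maximal_monotone_def)
  have "monotone_op C"
    unfolding monotone_op_def
  proof (intro allI impI)
    fix x1 x2 u1 u2 assume h1: "u1 \<in> C x1" and h2: "u2 \<in> C x2"
    show "0 \<le> inner (u1 - u2) (x1 - x2)"
    proof (cases "x1 = x \<and> u1 = u")
      case True
      show ?thesis
      proof (cases "x2 = x \<and> u2 = u")
        case True thus ?thesis using \<open>x1 = x \<and> u1 = u\<close> by simp
      next
        case False
        hence "u2 \<in> B x2" using h2 by (auto simp: C_def split: if_splits)
        thus ?thesis using rel True by auto
      qed
    next
      case False
      hence b1: "u1 \<in> B x1" using h1 by (auto simp: C_def split: if_splits)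
      show ?thesis
      proof (cases "x2 = x \<and> u2 = u")
        case True thus ?thesis using rel b1 inner_swap by metis
      next
        case False
        hence "u2 \<in> B x2" using h2 by (auto simp: C_def split: if_splits)
        thus ?thesis using mB b1 unfolding monotone_op_def by blast
      qed
    qed
  qed
  moreover have "\<forall>z. B z \<subseteq> C z" by (auto simp: C_def)
  ultimately have "C = B" using mm unfolding maximal_monotone_def by blast
  thus ?thesis by (metis C_def insertI1)
qed

lemma max_mono_shift:
  fixes B :: "'a::real_inner \<Rightarrow> 'a set"
  assumes mm: "maximal_monotone B" and l: "l > 0"
  shows "maximal_monotone (\<lambda>z. (\<lambda>u. l *\<^sub>R u) ` B (z + y))" (is "maximal_monotone ?M")
proof -
  have mB: "monotone_op B" using mm by (simp add: maximal_monotone_def)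
  have monoM: "monotone_op ?M"
    unfolding monotone_op_def
  proof (intro allI impI)
    fix x1 x2 w1 w2 assume "w1 \<in> ?M x1" "w2 \<in> ?M x2"
    then obtain u1 u2 where u: "u1 \<in> B (x1 + y)" "u2 \<in> B (x2 + y)" "w1 = l *\<^sub>R u1" "w2 = l *\<^sub>R u2" by auto
    have "0 \<le> inner (u1 - u2) ((x1 + y) - (x2 + y))" using mB u unfolding monotone_op_def by blast
    hence "0 \<le> l * inner (u1 - u2) (x1 - x2)" using l by simp
    thus "0 \<le> inner (w1 - w2) (x1 - x2)" using u by (simp add: scaleR_diff_right[symmetric])
  qed
  moreover have "\<forall>C. monotone_op C \<longrightarrow> (\<forall>x. ?M x \<subseteq> C x) \<longrightarrow> C = ?M"
  proof (intro allI impI)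
    fix C assume mC: "monotone_op C" and sub: "\<forall>x. ?M x \<subseteq> C x"
    define C' where "C' = (\<lambda>x. (\<lambda>w. (1/l) *\<^sub>R w) ` C (x - y))"
    have "monotone_op C'"
      unfolding monotone_op_def
    proof (intro allI impI)
      fix x1 x2 w1 w2 assume "w1 \<in> C' x1" "w2 \<in> C' x2"
      then obtain u1 u2 where u: "u1 \<in> C (x1 - y)" "u2 \<in> C (x2 - y)" "w1 = (1/l) *\<^sub>R u1" "w2 = (1/l) *\<^sub>R u2" by (auto simp: C'_def)
      have "0 \<le> inner (u1 - u2) ((x1 - y) - (x2 - y))" using mC u unfolding monotone_op_def by blast
      hence "0 \<le> (1/l) * inner (u1 - u2) (x1 - x2)" using l by simp
      thus "0 \<le> inner (w1 - w2) (x1 - x2)" using u by (simp add: scaleR_diff_right[symmetric])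
    qed
    moreover have "\<forall>x. B x \<subseteq> C' x"
    proof (intro allI subsetI)
      fix x u assume "u \<in> B x"
      hence "l *\<^sub>R u \<in> ?M (x - y)" by auto
      hence "l *\<^sub>R u \<in> C (x - y)" using sub by blast
      moreover have "u = (1/l) *\<^sub>R (l *\<^sub>R u)" using l by simp
      ultimately show "u \<in> C' x" unfolding C'_def by blast
    qed
    ultimately have CB: "C' = B" using mm unfolding maximal_monotone_def by blast
    show "C = ?M"
    proof (rule ext, rule equalityI)
      fix z show "C z \<subseteq> ?M z"
      proof
        fix w assume "w \<in> C z"
        hence "(1/l) *\<^sub>R w \<in> C' (z + y)" unfolding C'_def by auto
        hence "(1/l) *\<^sub>R w \<in> B (z + y)" using CB by simp
        moreover have "w = l *\<^sub>R ((1/l) *\<^sub>R w)" using l by simp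
        ultimately show "w \<in> ?M z" by blast
      qed
    next
      fix z show "?M z \<subseteq> C z" using sub by blast
    qed
  qed
  ultimately show ?thesis unfolding maximal_monotone_def by blast
qed



lemma norm_half_sum: "(norm ((1/2) *\<^sub>R x + (1/2) *\<^sub>R y))^2 = ((norm x)^2 + (norm (y::'a::real_inner))^2)/2 - (norm (x - y))^2/4"
  by (simp add: power2_norm_eq_inner inner_add_left inner_add_right inner_diff_left inner_diff_right inner_commute algebra_simps; simp add: field_simps)

lemma norm_sum_sq: "(norm (a - b))^2/4 + inner a b = (norm (a + (b::'a::real_inner)))^2/4"
  by (simp add: power2_norm_eq_inner inner_add_left inner_add_right inner_diff_left inner_diff_right inner_commute algebra_simps; simp add: field_simps)

lemma norm_comb_sq: "(norm ((1-t) *\<^sub>R w + t *\<^sub>R q))^2 = (1-t)^2 * inner w w + 2*t*(1-t) * inner w q + t^2 * inner q (q::'a::real_inner)"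
  by (simp add: power2_norm_eq_inner inner_add_left inner_add_right inner_commute algebra_simps; simp add: power2_eq_square algebra_simps)

lemma lin_nonneg: fixes c K :: real assumes "\<And>t. 0 < t \<Longrightarrow> t \<le> 1 \<Longrightarrow> 0 \<le> c + t * K" "K \<ge> 0" shows "0 \<le> c"
proof (rule ccontr)
  assume "\<not> 0 \<le> c"
  define t where "t = min 1 (-c/(2*(K+1)))"
  have t0: "0 < t" "t \<le> 1" using \<open>\<not> 0 \<le> c\<close> assms(2) by (auto simp: t_def divide_neg_pos)
  have "t * K \<le> (-c/(2*(K+1))) * K" using assms(2) by (intro mult_right_mono) (auto simp: t_def)
  also have "\<dots> \<le> -c/2" using \<open>\<not> 0 \<le> c\<close> assms(2) by (simp add: field_simps)
  finally have "c + t*K < 0" using \<open>\<not> 0 \<le> c\<close> by linarith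
  thus False using assms(1)[OF t0] by linarith
qed



lemma minty_core:
  fixes M :: "'a::{real_inner,complete_space} \<Rightarrow> 'a set"
  assumes mm: "maximal_monotone M"
  shows "\<exists>z. -z \<in> M z"
proof -
  have mono: "\<And>x y u v. u \<in> M x \<Longrightarrow> v \<in> M y \<Longrightarrow> 0 \<le> inner (u - v) (x - y)"
    using mm unfolding maximal_monotone_def monotone_op_def by blast
  have "\<exists>z. \<forall>y v. v \<in> M y \<longrightarrow> 0 \<le> inner (-z - v) (z - y)"
  proof (cases "\<exists>y v. v \<in> M y")
    case False then show ?thesis by auto
  next
    case True
    define Gen :: "('a \<times> 'a \<times> real) set" where "Gen = (\<lambda>(y,v). (y, v, inner y v)) ` {(y,v). v \<in> M y}"
    define h :: "'a \<times> 'a \<times> real \<Rightarrow> 'a \<times> 'a \<times> real \<Rightarrow> real" where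
      "h = (\<lambda>p q. snd (snd p) + snd (snd q) - inner (fst p) (fst (snd q)) - inner (fst q) (fst (snd p)))"
    define D where "D = convex hull Gen"
    have hsym: "h p q = h q p" for p q by (simp add: h_def inner_commute)
    have hGen: "0 \<le> h p q" if pq0: "p \<in> Gen" "q \<in> Gen" for p q
    proof -
      obtain y1 v1 y2 v2 where pq: "v1 \<in> M y1" "v2 \<in> M y2" "p = (y1, v1, inner y1 v1)" "q = (y2, v2, inner y2 v2)"
        using pq0 unfolding Gen_def by fast
      have "h p q = inner (v1 - v2) (y1 - y2)"
        using pq by (simp add: h_def inner_diff_left inner_diff_right inner_commute)
      thus ?thesis using mono pq by simp
    qed
    have conv1: "convex {p. 0 \<le> h p q}" for q
      unfolding convex_def
    proof (intro ballI allI impI, simp)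
      fix x y :: "'a \<times> 'a \<times> real" and u v :: real
      assume a: "0 \<le> h x q" "0 \<le> h y q" "0 \<le> u" "0 \<le> v" "u + v = 1"
      have "h (u *\<^sub>R x + v *\<^sub>R y) q - (u * h x q + v * h y q) = (1 - u - v) * snd (snd q)"
        by (simp add: h_def inner_add_left inner_add_right algebra_simps)
      hence "h (u *\<^sub>R x + v *\<^sub>R y) q = u * h x q + v * h y q" using a(5) by (simp add: algebra_simps)
      thus "0 \<le> h (u *\<^sub>R x + v *\<^sub>R y) q" using a by simp
    qed
    have step1: "D \<subseteq> {p. 0 \<le> h p q}" if "q \<in> Gen" for q
      unfolding D_def
    proof (rule hull_minimal)
      show "Gen \<subseteq> {p. 0 \<le> h p q}" using hGen that by blast
      show "convex {p. 0 \<le> h p q}" by (rule conv1)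
    qed
    have hD: "0 \<le> h p q" if "p \<in> D" "q \<in> D" for p q
    proof -
      have "D \<subseteq> {q. 0 \<le> h q p}"
        unfolding D_def
      proof (rule hull_minimal)
        show "Gen \<subseteq> {q. 0 \<le> h q p}"
        proof
          fix q' assume "q' \<in> Gen"
          hence "0 \<le> h p q'" using step1 that(1) by blast
          thus "q' \<in> {q. 0 \<le> h q p}" using hsym[of p q'] by simp
        qed
        show "convex {q. 0 \<le> h q p}" by (rule conv1)
      qed
      thus ?thesis using that hsym[of p q] by auto
    qed
    have convD: "convex D" unfolding D_def by simp
    have GenD: "Gen \<subseteq> D" unfolding D_def by (rule hull_subset)
    define W :: "'a \<times> 'a \<times> real \<Rightarrow> 'a" where "W = (\<lambda>p. fst p - fst (snd p))"
    define V :: "'a \<times> 'a \<times> real \<Rightarrow> real" where "V = (\<lambda>p. snd (snd p) + (norm (W p))^2 / 4)"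
    have Vnn: "0 \<le> V p" if "p \<in> D" for p
    proof -
      have "0 \<le> h p p" using hD that by blast
      hence "inner (fst p) (fst (snd p)) \<le> snd (snd p)" by (simp add: h_def inner_commute)
      moreover have "(norm (W p))^2/4 + inner (fst p) (fst (snd p)) = (norm (fst p + fst (snd p)))^2/4"
        unfolding W_def by (rule norm_sum_sq)
      moreover have "0 \<le> (norm (fst p + fst (snd p)))^2/4" by simp
      ultimately show ?thesis unfolding V_def by linarith
    qed
    obtain y0 v0 where "v0 \<in> M y0" using True by blast
    hence "(y0, v0, inner y0 v0) \<in> D" using GenD unfolding Gen_def by force
    hence Dne: "V ` D \<noteq> {}" by blast
    have bdd: "bdd_below (V ` D)" using Vnn by (meson bdd_belowI2)
    define m where "m = Inf (V ` D)"
    have mle: "m \<le> V q" if "q \<in> D" for q unfolding m_def using bdd that by (simp add: cInf_lower)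
    have m0: "0 \<le> m" unfolding m_def using Dne Vnn by (auto intro!: cInf_greatest)
    have "\<forall>n. \<exists>q. q \<in> D \<and> V q < m + inverse (real (Suc n))"
    proof
      fix n
      have "Inf (V ` D) < m + inverse (real (Suc n))" unfolding m_def by simp
      from cInf_lessD[OF Dne this] show "\<exists>q. q \<in> D \<and> V q < m + inverse (real (Suc n))" by blast
    qed
    then obtain p where p: "\<And>n. p n \<in> D" "\<And>n. V (p n) < m + inverse (real (Suc n))" by metis
    have mid: "(norm (W a - W b))^2 \<le> 8 * (V a + V b - 2 * m)" if "a \<in> D" "b \<in> D" for a b
    proof -
      define c where "c = (1/2) *\<^sub>R a + (1/2) *\<^sub>R b"
      have "c \<in> D" unfolding c_def using convD that by (intro convexD) auto
      hence "m \<le> V c" by (rule mle)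
      moreover have "W c = (1/2) *\<^sub>R W a + (1/2) *\<^sub>R W b" unfolding c_def W_def by (simp add: algebra_simps)
      moreover have "snd (snd c) = (snd (snd a) + snd (snd b))/2" unfolding c_def by simp
      ultimately have "m \<le> (snd (snd a) + snd (snd b))/2 + (((norm (W a))^2 + (norm (W b))^2)/2 - (norm (W a - W b))^2/4)/4"
        unfolding V_def by (simp add: norm_half_sum)
      thus ?thesis unfolding V_def by (simp add: field_simps)
    qed
    have Cau: "Cauchy (\<lambda>n. W (p n))"
    proof (rule metric_CauchyI)
      fix e :: real assume e: "0 < e"
      obtain N :: nat where N: "16 / e^2 < real N" using reals_Archimedean2 by blast
      have "dist (W (p a)) (W (p b)) < e" if "N \<le> a" "N \<le> b" for a b
      proof -
        have ia: "inverse (real (Suc a)) \<le> inverse (real (Suc N))" using that by (simp add: field_simps)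
        have ib: "inverse (real (Suc b)) \<le> inverse (real (Suc N))" using that by (simp add: field_simps)
        have "(norm (W (p a) - W (p b)))^2 \<le> 8 * (V (p a) + V (p b) - 2 * m)" using mid p by blast
        also have "\<dots> \<le> 16 * inverse (real (Suc N))" using p(2)[of a] p(2)[of b] ia ib by (smt (verit))
        also have "\<dots> < e^2"
        proof -
          have "16 < e^2 * real (Suc N)" using N e by (simp add: field_simps) (smt (verit) zero_less_power)
          thus ?thesis using e by (simp add: field_simps)
        qed
        finally have "(norm (W (p a) - W (p b)))^2 < e^2" .
        have "norm (W (p a) - W (p b)) < e" 
        proof (rule ccontr)
          assume "\<not> norm (W (p a) - W (p b)) < e"
          hence "e^2 \<le> (norm (W (p a) - W (p b)))^2" using e by (intro power_mono) auto
          thus False using \<open>(norm (W (p a) - W (p b)))^2 < e^2\<close> by linarith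
        qed
        thus ?thesis by (simp add: dist_norm)
      qed
      thus "\<exists>M. \<forall>m\<ge>M. \<forall>n\<ge>M. dist (W (p m)) (W (p n)) < e" by blast
    qed
    then obtain w where w: "(\<lambda>n. W (p n)) \<longlonglongrightarrow> w" using Cauchy_convergent_iff convergent_def by blast
    have Vlim: "(\<lambda>n. V (p n)) \<longlonglongrightarrow> m"
    proof (rule tendsto_sandwich[OF _ _ tendsto_const LIMSEQ_inverse_real_of_nat_add])
      show "\<forall>\<^sub>F n in sequentially. m \<le> V (p n)" using mle p by auto
      show "\<forall>\<^sub>F n in sequentially. V (p n) \<le> m + inverse (real (Suc n))" using p(2) by (intro always_eventually allI less_imp_le)
    qed
    have slim: "(\<lambda>n. snd (snd (p n))) \<longlonglongrightarrow> m - (norm w)^2/4"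
    proof -
      have "(\<lambda>n. V (p n) - (norm (W (p n)))^2/4) \<longlonglongrightarrow> m - (norm w)^2/4"
        by (intro tendsto_intros Vlim w) simp
      thus ?thesis unfolding V_def by simp
    qed
    define z where "z = (1/2) *\<^sub>R w"
    show ?thesis
    proof (intro exI allI impI)
      fix y v assume yv: "v \<in> M y"
      define g where "g = (y, v, inner y v)"
      have gD: "g \<in> D" using yv GenD unfolding Gen_def g_def by force
      define q where "q = y - v"
      define c where "c = inner y v - m - inner w w / 4 + inner w q / 2"
      define K where "K = inner (w - q) (w - q) / 4"
      have "0 \<le> c + t * K" if t: "0 < t" "t \<le> 1" for t
      proof -
        have Lt: "m \<le> (1-t) * (m - (norm w)^2/4) + t * inner y v + (norm ((1-t) *\<^sub>R w + t *\<^sub>R q))^2/4"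
        proof (rule LIMSEQ_le_const)
          show "(\<lambda>n. (1-t) * snd (snd (p n)) + t * inner y v + (norm ((1-t) *\<^sub>R W (p n) + t *\<^sub>R q))^2/4)
             \<longlonglongrightarrow> (1-t) * (m - (norm w)^2/4) + t * inner y v + (norm ((1-t) *\<^sub>R w + t *\<^sub>R q))^2/4"
            by (intro tendsto_intros slim w) simp
          show "\<exists>N. \<forall>n\<ge>N. m \<le> (1-t) * snd (snd (p n)) + t * inner y v + (norm ((1-t) *\<^sub>R W (p n) + t *\<^sub>R q))^2/4"
          proof (intro exI allI impI)
            fix n
            define r where "r = (1-t) *\<^sub>R p n + t *\<^sub>R g"
            have "r \<in> D" unfolding r_def using convD p(1) gD t by (intro convexD) auto
            hence "m \<le> V r" by (rule mle)
            moreover have "W r = (1-t) *\<^sub>R W (p n) + t *\<^sub>R q" unfolding r_def W_def g_def q_def by (simp add: algebra_simps)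
            moreover have "snd (snd r) = (1-t) * snd (snd (p n)) + t * inner y v" unfolding r_def g_def by simp
            ultimately show "m \<le> (1-t) * snd (snd (p n)) + t * inner y v + (norm ((1-t) *\<^sub>R W (p n) + t *\<^sub>R q))^2/4"
              unfolding V_def by simp
          qed
        qed
        have nw: "(norm w)^2 = inner w w" by (simp add: power2_norm_eq_inner)
        have kk: "inner (w - q) (w - q) = inner w w - 2 * inner w q + inner q q"
          by (simp add: inner_diff_left inner_diff_right inner_commute)
        have "(1-t) * (m - (norm w)^2/4) + t * inner y v + (norm ((1-t) *\<^sub>R w + t *\<^sub>R q))^2/4 - m = t * (c + t * K)"
          unfolding norm_comb_sq nw c_def K_def kk by (simp add: algebra_simps power2_eq_square; simp add: field_simps)
        hence "0 \<le> t * (c + t * K)" using Lt by linarith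
        thus ?thesis using t by (simp add: zero_le_mult_iff)
      qed
      moreover have "0 \<le> K" unfolding K_def by simp
      ultimately have "0 \<le> c" by (rule lin_nonneg)
      moreover have "inner (-z - v) (z - y) = c + m"
        unfolding z_def c_def q_def by (simp add: inner_diff_left inner_diff_right inner_add_left inner_add_right inner_commute algebra_simps; simp add: field_simps)
      ultimately show "0 \<le> inner (-z - v) (z - y)" using m0 by linarith
    qed
  qed
  then obtain z where "\<forall>y v. v \<in> M y \<longrightarrow> 0 \<le> inner (-z - v) (z - y)" by blast
  thus ?thesis using max_mono_related[OF mm] by blast
qed



lemma resolvent_unique:
  fixes B :: "'a::real_inner \<Rightarrow> 'a set"
  assumes mm: "maximal_monotone B" and l: "l > 0"
    and h1: "u1 \<in> B x1" "y = x1 + l *\<^sub>R u1" and h2: "u2 \<in> B x2" "y = x2 + l *\<^sub>R u2"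
  shows "x1 = x2"
proof -
  have "0 \<le> inner (u1 - u2) (x1 - x2)" using mm h1 h2 unfolding maximal_monotone_def monotone_op_def by blast
  moreover have "x1 - x2 = - (l *\<^sub>R (u1 - u2))" using h1 h2 by (simp add: algebra_simps)
  ultimately have "0 \<le> - l * inner (u1 - u2) (u1 - u2)" by simp
  hence "inner (u1 - u2) (u1 - u2) \<le> 0" using l by (simp add: mult_le_0_iff)
  hence "inner (u1 - u2) (u1 - u2) = 0" by (metis antisym inner_ge_zero)
  hence "u1 = u2" by simp
  thus ?thesis using h1 h2 by simp
qed

lemma resolvent_eq:
  fixes B :: "'a::real_inner \<Rightarrow> 'a set"
  assumes mm: "maximal_monotone B" and l: "l > 0" and h: "u \<in> B x" "y = x + l *\<^sub>R u"
  shows "resolvent l B y = x"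
  unfolding resolvent_def
proof (rule the_equality)
  show "y \<in> (\<lambda>u. x + l *\<^sub>R u) ` B x" using h by blast
  fix x' assume "y \<in> (\<lambda>u. x' + l *\<^sub>R u) ` B x'"
  then obtain u' where "u' \<in> B x'" "y = x' + l *\<^sub>R u'" by blast
  thus "x' = x" using resolvent_unique[OF mm l] h by metis
qed

lemma resolvent_exists:
  fixes B :: "'a::{real_inner,complete_space} \<Rightarrow> 'a set"
  assumes mm: "maximal_monotone B" and l: "l > 0"
  shows "\<exists>u\<in>B (resolvent l B y). y = resolvent l B y + l *\<^sub>R u"
proof -
  obtain z where "-z \<in> (\<lambda>u. l *\<^sub>R u) ` B (z + y)"
    using minty_core[OF max_mono_shift[OF mm l, of y]] by blast
  then obtain u where u: "u \<in> B (z + y)" "-z = l *\<^sub>R u" by blast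
  have "y = (z + y) + l *\<^sub>R u" using u(2) by (metis add.commute add_minus_cancel)
  hence "resolvent l B y = z + y" using resolvent_eq[OF mm l u(1)] by blast
  thus ?thesis using u \<open>y = (z + y) + l *\<^sub>R u\<close> by auto
qed

lemma uc_growth:
  fixes f :: "'a::real_normed_vector \<Rightarrow> 'b::real_normed_vector"
  assumes "uniformly_continuous_on UNIV f"
  shows "\<exists>\<rho>>0. \<forall>a b. norm (f a - f b) \<le> norm (a - b) / \<rho> + 1"
proof -
  obtain d where d: "d > 0" "\<And>a b. dist a b < d \<Longrightarrow> dist (f a) (f b) < 1"
    using assms unfolding uniformly_continuous_on_def by (metis UNIV_I zero_less_one)
  define \<rho> where "\<rho> = d / 2"
  have \<rho>: "\<rho> > 0" "\<rho> < d" using d by (auto simp: \<rho>_def)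
  have claim: "\<forall>a b::'a. norm (a - b) \<le> real n * \<rho> \<longrightarrow> norm (f a - f b) \<le> real n" for n
  proof (induction n)
    case 0 then show ?case by simp
  next
    case (Suc n)
    show ?case
    proof (intro allI impI)
      fix a b :: 'a assume ab: "norm (a - b) \<le> real (Suc n) * \<rho>"
      define D where "D = norm (a - b)"
      show "norm (f a - f b) \<le> real (Suc n)"
      proof (cases "D \<le> \<rho>")
        case True
        hence "dist a b < d" using \<rho> by (simp add: D_def dist_norm)
        hence "norm (f a - f b) < 1" using d(2) by (simp add: dist_norm)
        thus ?thesis by simp
      next
        case False
        hence Dp: "D > 0" "\<rho> < D" using \<rho> by auto
        define c where "c = a + (\<rho> / D) *\<^sub>R (b - a)"
        have "a - c = - ((\<rho> / D) *\<^sub>R (b - a))" by (simp add: c_def)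
        hence "norm (a - c) = \<rho>" using Dp \<rho> by (simp add: D_def norm_minus_commute)
        hence "norm (f a - f c) < 1" using d(2) \<rho> by (simp add: dist_norm)
        have "c - b = (1 - \<rho> / D) *\<^sub>R (a - b)" by (simp add: c_def algebra_simps)
        hence "norm (c - b) = (1 - \<rho> / D) * D" using Dp by (simp add: D_def)
        also have "\<dots> = D - \<rho>" using Dp by (simp add: field_simps)
        also have "\<dots> \<le> real n * \<rho>" using ab by (simp add: D_def algebra_simps)
        finally have "norm (f c - f b) \<le> real n" using Suc.IH by blast
        have "norm (f a - f b) \<le> norm (f a - f c) + norm (f c - f b)" by (rule norm_diff_triangle_le) auto 
        thus ?thesis using \<open>norm (f a - f c) < 1\<close> \<open>norm (f c - f b) \<le> real n\<close> by simp
      qed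
    qed
  qed
  have "norm (f a - f b) \<le> norm (a - b) / \<rho> + 1" for a b
  proof -
    define n where "n = nat \<lceil>norm (a - b) / \<rho>\<rceil>"
    have n1: "norm (a - b) / \<rho> \<le> real n" unfolding n_def by linarith
    have nn: "0 \<le> norm (a - b) / \<rho>" using \<rho> by simp
    have "real n = real_of_int \<lceil>norm (a - b) / \<rho>\<rceil>" unfolding n_def using nn by simp
    hence n2: "real n \<le> norm (a - b) / \<rho> + 1" using of_int_ceiling_le_add_one[of "norm (a - b) / \<rho>"] by linarith
    have "norm (a - b) \<le> real n * \<rho>" using n1 \<rho> by (simp add: field_simps)
    thus ?thesis using claim n2 by force
  qed
  thus ?thesis using \<rho> by blast
qed



theorem proposition4p1:
  fixes A1 A2 :: "'a::{real_inner, complete_space} \<Rightarrow> 'a"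
    and B :: "'a \<Rightarrow> 'a set"
    and \<beta> \<theta> \<delta> \<alpha> :: real and x :: 'a
  assumes "\<beta> > 0" and "cocoercive \<beta> A1"
    and "maximal_monotone (\<lambda>y. {A2 y})" and "uniformly_continuous_on UNIV A2"
    and "maximal_monotone B"
    and "zer (\<lambda>y. A1 y + A2 y) B \<noteq> {}"
    and "0 < \<theta>" "\<theta> < 1" "0 < \<delta>" "\<delta> < 1" "\<alpha> > 0"
  shows "\<exists>j::nat.
    (let xb = resolvent (\<alpha> * \<theta> ^ j) B (x - (\<alpha> * \<theta> ^ j) *\<^sub>R (A1 x + A2 x))
     in \<alpha> * \<theta> ^ j * inner (A2 x - A2 xb) (x - xb) \<le> \<delta> * (norm (x - xb))\<^sup>2)"
proof (rule ccontr)
  note mm = assms(5)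
  define Ax where "Ax = A1 x + A2 x"
  define lam where "lam = (\<lambda>j::nat. \<alpha> * \<theta> ^ j)"
  define xb where "xb = (\<lambda>j. resolvent (lam j) B (x - lam j *\<^sub>R Ax))"
  have lpos: "lam j > 0" for j using assms by (simp add: lam_def)
  assume "\<not> ?thesis"
  hence F: "\<delta> * (norm (x - xb j))^2 < lam j * inner (A2 x - A2 (xb j)) (x - xb j)" for j
    by (auto simp: Let_def xb_def lam_def Ax_def not_le)
  define d where "d = (\<lambda>j. norm (x - xb j))"
  obtain \<rho> where \<rho>: "\<rho> > 0" "\<And>a b. norm (A2 a - A2 b) \<le> norm (a - b) / \<rho> + 1"
    using uc_growth[OF assms(4)] by blast
  have E1: "\<delta> * d j < lam j * norm (A2 x - A2 (xb j))" for j
  proof -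
    have "inner (A2 x - A2 (xb j)) (x - xb j) \<le> norm (A2 x - A2 (xb j)) * d j"
      unfolding d_def by (rule norm_cauchy_schwarz)
    hence "\<delta> * (d j)^2 < lam j * (norm (A2 x - A2 (xb j)) * d j)"
      using F[of j] lpos[of j] unfolding d_def by (smt (verit) mult_left_mono)
    moreover have "d j > 0"
    proof (rule ccontr)
      assume "\<not> d j > 0" hence "x - xb j = 0" by (simp add: d_def)
      thus False using F[of j] by simp
    qed
    ultimately show ?thesis by (simp add: power2_eq_square algebra_simps)
  qed
  have lam0: "lam \<longlonglongrightarrow> 0" unfolding lam_def
    using assms(7,8) by (intro tendsto_mult_right_zero LIMSEQ_power_zero) auto
  have "\<forall>\<^sub>F j in sequentially. lam j < \<rho> * \<delta> / 2"
    using order_tendstoD(2)[OF lam0, of "\<rho> * \<delta> / 2"] \<rho> assms(9) by simp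
  hence ev: "\<forall>\<^sub>F j in sequentially. d j \<le> 2 * lam j / \<delta>"
  proof (rule eventually_mono)
    fix j assume lj: "lam j < \<rho> * \<delta> / 2"
    have "\<delta> * d j < lam j * (d j / \<rho> + 1)"
      using E1[of j] \<rho>(2)[of x "xb j"] lpos[of j] unfolding d_def
      by (smt (verit) mult_left_mono)
    also have "\<dots> = (lam j / \<rho>) * d j + lam j" using \<rho> by (simp add: field_simps)
    also have "\<dots> \<le> (\<delta> / 2) * d j + lam j"
    proof -
      have "lam j / \<rho> \<le> \<delta> / 2" using lj \<rho> by (simp add: field_simps)
      moreover have "d j \<ge> 0" by (simp add: d_def)
      ultimately have "(lam j / \<rho>) * d j \<le> (\<delta> / 2) * d j" by (rule mult_right_mono)
      thus ?thesis by linarith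
    qed
    finally have "\<delta> * d j < 2 * lam j" by linarith
    thus "d j \<le> 2 * lam j / \<delta>" using assms(9) by (simp add: field_simps)
  qed
  have d0: "d \<longlonglongrightarrow> 0"
  proof (rule tendsto_sandwich[OF _ ev tendsto_const])
    show "\<forall>\<^sub>F n in sequentially. 0 \<le> d n" by (simp add: d_def)
    show "(\<lambda>j. 2 * lam j / \<delta>) \<longlonglongrightarrow> 0" using lam0 assms(9) by (intro tendsto_eq_intros) auto
  qed
  have xbx: "xb \<longlonglongrightarrow> x"
  proof -
    have "(\<lambda>j. x - xb j) \<longlonglongrightarrow> 0" using d0 unfolding d_def by (simp add: tendsto_norm_zero_iff)
    hence "(\<lambda>j. x - (x - xb j)) \<longlonglongrightarrow> x - 0" by (intro tendsto_intros)
    thus ?thesis by simp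
  qed
  have "continuous_on UNIV A2" using assms(4) by (rule uniformly_continuous_imp_continuous)
  hence "isCont A2 x" by (simp add: continuous_on_eq_continuous_at)
  hence A2lim: "(\<lambda>j. A2 (xb j)) \<longlonglongrightarrow> A2 x" by (rule isCont_tendsto_compose[OF _ xbx])
  have N0: "(\<lambda>j. norm (A2 x - A2 (xb j))) \<longlonglongrightarrow> 0"
  proof -
    have "(\<lambda>j. A2 x - A2 (xb j)) \<longlonglongrightarrow> A2 x - A2 x" by (intro tendsto_intros A2lim)
    thus ?thesis by (simp add: tendsto_norm_zero_iff)
  qed
  define u where "u = (\<lambda>j. (1 / lam j) *\<^sub>R (x - xb j))"
  have u0: "u \<longlonglongrightarrow> 0"
  proof -
    have "(\<lambda>j. norm (u j)) \<longlonglongrightarrow> 0"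
    proof (rule tendsto_sandwich[OF _ _ tendsto_const])
      show "\<forall>\<^sub>F n in sequentially. 0 \<le> norm (u n)" by simp
      show "\<forall>\<^sub>F n in sequentially. norm (u n) \<le> norm (A2 x - A2 (xb n)) / \<delta>"
      proof (intro always_eventually allI)
        fix j
        have "norm (u j) = d j / lam j" using lpos[of j] by (simp add: u_def d_def)
        also have "\<dots> \<le> norm (A2 x - A2 (xb j)) / \<delta>"
          using E1[of j] lpos[of j] assms(9) by (simp add: field_simps)
        finally show "norm (u j) \<le> norm (A2 x - A2 (xb j)) / \<delta>" .
      qed
      show "(\<lambda>j. norm (A2 x - A2 (xb j)) / \<delta>) \<longlonglongrightarrow> 0" by (rule tendsto_divide_zero[OF N0])
    qed
    thus ?thesis by (simp add: tendsto_norm_zero_iff)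
  qed
  have bj: "u j - Ax \<in> B (xb j)" for j
  proof -
    obtain b where b: "b \<in> B (xb j)" "x - lam j *\<^sub>R Ax = xb j + lam j *\<^sub>R b"
      using resolvent_exists[OF mm lpos[of j], of "x - lam j *\<^sub>R Ax"] unfolding xb_def by blast
    have "x - xb j = lam j *\<^sub>R (b + Ax)" using b(2) by (simp add: algebra_simps)
    hence "u j = b + Ax" using lpos[of j] by (simp add: u_def)
    thus ?thesis using b(1) by simp
  qed
  have "-Ax \<in> B x"
  proof (rule max_mono_related[OF mm], intro allI impI)
    fix y v assume v: "v \<in> B y"
    have lim: "(\<lambda>j. inner ((u j - Ax) - v) (xb j - y)) \<longlonglongrightarrow> inner ((0 - Ax) - v) (x - y)"
      by (intro tendsto_intros u0 xbx)
    have mB: "monotone_op B" using mm by (simp add: maximal_monotone_def)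
    have "0 \<le> inner ((u n - Ax) - v) (xb n - y)" for n
      using mB bj[of n] v unfolding monotone_op_def by blast
    hence "\<exists>N. \<forall>n\<ge>N. 0 \<le> inner ((u n - Ax) - v) (xb n - y)" by blast
    from LIMSEQ_le_const[OF lim this] show "0 \<le> inner (- Ax - v) (x - y)" by simp
  qed
  hence "xb 0 = x" unfolding xb_def
    by (intro resolvent_eq[OF mm lpos]) (auto simp: algebra_simps)
  thus False using F[of 0] by simp
qed

end
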